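(* Let $v\ge2$ and $k\in\{3,4\}$. Then an optimum $(d,2)$-CDA$((d+1)v^2;k,v)$ exists for every positive integer $d$ with $d+1\le v$.
   Context: Consecutive $t$-way interaction in an $N\times k$ array $A=(a_{ij})$ over a $v$-set $V$: $T=\{(i,x_i),\dots,(i+t-1,x_{i+t-1})\}$, $1\le i\le k-t+1$, $x_r\in V$; $\rho(A,T)=\{r: a_{r,j}=x_j\ \forall (j,x_j)\in T\}$, $\rho(A,\mathcal T)=\bigcup_{T\in\mathcal T}\rho(A,T)$. A $(d,t)$-CDA$(N;k,v)$ is an $N\times k$ array over $V$ in which every $t$ consecutive columns contain every $t$-tuple at least once, and such that for every set $\mathcal T$ of exactly $d$ distinct consecutive $t$-way interactions and every consecutive $t$-way interaction $T$: $\rho(A,T)\subseteq\rho(A,\mathcal T)$ iff $T\in\mathcal T$. It is optimum if $N=(d+1)v^t$. *)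

theory Defs
  imports Main
begin

text \<open>Arrays: an N x k array over V = {0..<v} is a function A :: nat => nat => nat,
  rows 0..<N, columns 0..<k (columns are 0-indexed), with A r j in {0..<v}.\<close>

definition is_array :: "nat \<Rightarrow> nat \<Rightarrow> nat \<Rightarrow> (nat \<Rightarrow> nat \<Rightarrow> nat) \<Rightarrow> bool" where
  "is_array N k v A \<longleftrightarrow> (\<forall>r<N. \<forall>j<k. A r j \<in> {0..<v})"

definition cons_interactions :: "nat \<Rightarrow> nat \<Rightarrow> nat \<Rightarrow> (nat \<times> nat) set set" where
  "cons_interactions t k v =
     {T. \<exists>i x. i + t \<le> k \<and> (\<forall>j<t. x (i + j) \<in> {0..<v}) \<and>
              T = {(i + j, x (i + j)) | j. j < t}}"

definition rho :: "nat \<Rightarrow> (nat \<Rightarrow> nat \<Rightarrow> nat) \<Rightarrow> (nat \<times> nat) set \<Rightarrow> nat set" where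
  "rho N A T = {r. r < N \<and> (\<forall>(j, x)\<in>T. A r j = x)}"

definition rho_set :: "nat \<Rightarrow> (nat \<Rightarrow> nat \<Rightarrow> nat) \<Rightarrow> (nat \<times> nat) set set \<Rightarrow> nat set" where
  "rho_set N A \<T> = (\<Union>T\<in>\<T>. rho N A T)"

definition is_CDA :: "nat \<Rightarrow> nat \<Rightarrow> nat \<Rightarrow> nat \<Rightarrow> nat \<Rightarrow> (nat \<Rightarrow> nat \<Rightarrow> nat) \<Rightarrow> bool" where
  "is_CDA d t N k v A \<longleftrightarrow>
     is_array N k v A \<and>
     (\<forall>i. i + t \<le> k \<longrightarrow> (\<forall>x. (\<forall>j<t. x j \<in> {0..<v}) \<longrightarrow>
          (\<exists>r<N. \<forall>j<t. A r (i + j) = x j))) \<and>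
     (\<forall>\<T>. \<T> \<subseteq> cons_interactions t k v \<and> card \<T> = d \<longrightarrow>
        (\<forall>T\<in>cons_interactions t k v. rho N A T \<subseteq> rho_set N A \<T> \<longleftrightarrow> T \<in> \<T>))"

definition is_optimum_CDA :: "nat \<Rightarrow> nat \<Rightarrow> nat \<Rightarrow> nat \<Rightarrow> nat \<Rightarrow> (nat \<Rightarrow> nat \<Rightarrow> nat) \<Rightarrow> bool" where
  "is_optimum_CDA d t N k v A \<longleftrightarrow> is_CDA d t N k v A \<and> N = (d + 1) * v ^ t"

end

theory Submission
  imports Defs
begin

definition colv :: "nat \<Rightarrow> nat \<Rightarrow> nat \<Rightarrow> nat \<Rightarrow> nat \<Rightarrow> nat" where
  "colv v s a b j = (if j = 0 then a else if j = 1 then b else if j = 2 then (a+b+s) mod v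
     else if j = 3 then (b+s) mod v else 0)"

definition Arr :: "nat \<Rightarrow> nat \<Rightarrow> nat \<Rightarrow> nat" where
  "Arr v r j = colv v (r div v div v) (r div v mod v) (r mod v) j"

definition enc :: "nat \<Rightarrow> nat \<Rightarrow> nat \<Rightarrow> nat \<Rightarrow> nat" where
  "enc v s a b = (s*v+a)*v+b"

lemma Arr_enc: "a < v \<Longrightarrow> b < v \<Longrightarrow> Arr v (enc v s a b) j = colv v s a b j"
proof -
  assume a: "a < v" and b: "b < v"
  have 1: "enc v s a b mod v = b" unfolding enc_def using b by simp
  have 2: "enc v s a b div v = s*v+a" unfolding enc_def using b by simp
  have 3: "(s*v+a) mod v = a" using a by simp
  have 4: "(s*v+a) div v = s" using a by simp
  show ?thesis unfolding Arr_def using 1 2 3 4 by simp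
qed

lemma enc_less: "s \<le> d \<Longrightarrow> a < v \<Longrightarrow> b < v \<Longrightarrow> enc v s a b < (d+1)*v^2"
proof -
  assume s: "s \<le> d" and a: "a < v" and b: "b < v"
  have "enc v s a b < (s*v+a)*v + v" unfolding enc_def using b by simp
  also have "\<dots> = (s*v+a+1)*v" by (simp add: algebra_simps)
  also have "\<dots> \<le> (s*v+v)*v" using a by (intro mult_right_mono) auto
  also have "\<dots> = (s+1)*v*v" by (simp add: algebra_simps)
  also have "\<dots> \<le> (d+1)*v*v" using s by (intro mult_right_mono) auto
  finally have "enc v s a b < (d+1)*v*v" .
  moreover have "(d+1)*v^2 = (d+1)*v*v" by (simp add: power2_eq_square algebra_simps)
  ultimately show ?thesis by simp
qed

lemma inj_add_mod: "s < (v::nat) \<Longrightarrow> s' < v \<Longrightarrow> (c+s) mod v = (c+s') mod v \<Longrightarrow> s = s'"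
proof -
  assume h: "s < v" "s' < v" "(c+s) mod v = (c+s') mod v"
  have key: "\<And>x y. x < v \<Longrightarrow> y < v \<Longrightarrow> x \<le> y \<Longrightarrow> (c+x) mod v = (c+y) mod v \<Longrightarrow> x = y"
  proof -
    fix x y assume hx: "x < v" "y < v" "x \<le> y" "(c+x) mod v = (c+y) mod v"
    have "v dvd (c+y) - (c+x)" using hx(4) mod_eq_dvd_iff_nat[of "c+x" "c+y" v] hx(3) by simp
    hence "v dvd y - x" by simp
    moreover have "y - x < v" using hx by simp
    ultimately have "y - x = 0" by (metis dvd_imp_le le_antisym nat_less_le not_gr0)
    thus "x = y" using hx(3) by simp
  qed
  show ?thesis
  proof (cases "s \<le> s'")
    case True thus ?thesis using key h by blast
  next
    case False thus ?thesis using key[of s' s] h by simp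
  qed
qed

lemma inj_sub_mod: "s < (v::nat) \<Longrightarrow> s' < v \<Longrightarrow> v \<le> C \<Longrightarrow> (C - s) mod v = (C - s') mod v \<Longrightarrow> s = s'"
proof -
  assume h: "s < v" "s' < v" "v \<le> C" "(C - s) mod v = (C - s') mod v"
  have "(C - s + (s + s')) mod v = (C - s' + (s + s')) mod v"
    using h(4) by (metis mod_add_left_eq)
  hence "(C + s') mod v = (C + s) mod v" using h by (simp add: algebra_simps)
  thus ?thesis using inj_add_mod h by metis
qed

lemma two_set: "{(i + j, f (i + j)) | j. j < (2::nat)} = {(i, f i), (i+1, f (i+1))}"
proof -
  have a: "{j::nat. j<2} = {0,1}" by auto
  have "{(i + j, f (i + j)) | j. j < (2::nat)} = (\<lambda>j. (i + j, f (i + j))) ` {j. j < 2}"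
    by blast
  also have "\<dots> = {(i, f i), (i+1, f (i+1))}" unfolding a by simp
  finally show ?thesis .
qed

lemma cons2: "cons_interactions 2 k v = {T. \<exists>i p q. i + 2 \<le> k \<and> p < v \<and> q < v \<and> T = {(i,p),(i+1,q)}}"
proof (intro set_eqI iffI)
  fix T assume "T \<in> cons_interactions 2 k v"
  then obtain i x where h: "i + 2 \<le> k" "\<forall>j<2. x (i + j) \<in> {0..<v}" "T = {(i + j, x (i + j)) | j. j < 2}"
    unfolding cons_interactions_def by blast
  have "T = {(i, x i), (i+1, x (i+1))}" unfolding h(3) by (rule two_set)
  moreover have "x i < v" "x (i+1) < v"
  proof -
    have "(0::nat) < 2" "(1::nat) < 2" by simp_all
    from h(2)[rule_format, OF this(1)] h(2)[rule_format, OF this(2)]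
    show "x i < v" "x (i+1) < v" by simp_all
  qed
  ultimately show "T \<in> {T. \<exists>i p q. i + 2 \<le> k \<and> p < v \<and> q < v \<and> T = {(i,p),(i+1,q)}}" using h(1) by blast
next
  fix T assume "T \<in> {T. \<exists>i p q. i + 2 \<le> k \<and> p < v \<and> q < v \<and> T = {(i,p),(i+1,q)}}"
  then obtain i p q where h: "i + 2 \<le> k" "p < v" "q < v" "T = {(i,p),(i+1,q)}" by blast
  define x where "x = (\<lambda>n. if n = i then p else q)"
  have e1: "T = {(i + j, x (i + j)) | j. j < 2}" by (simp only: two_set) (simp add: h(4) x_def)
  have e2: "\<forall>j<2. x (i + j) \<in> {0..<v}" using h unfolding x_def by (auto simp: less_2_cases_iff)
  have P: "i + 2 \<le> k \<and> (\<forall>j<2. x (i + j) \<in> {0..<v}) \<and> T = {(i + j, x (i + j)) | j. j < 2}"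
    using h(1) e1 e2 by simp
  show "T \<in> cons_interactions 2 k v" unfolding cons_interactions_def
    by (rule CollectI, rule exI[of _ i], rule exI[of _ x], rule P)
qed

definition Rw :: "nat \<Rightarrow> nat \<Rightarrow> nat \<Rightarrow> nat \<Rightarrow> nat \<Rightarrow> nat" where
  "Rw v i p q s = (if i = 0 then enc v s p q
     else if i = 1 then enc v s ((q+2*v-p-s) mod v) p
     else enc v s ((p+v-q) mod v) ((q+v-s) mod v))"

lemma modfix: "(x::nat) = y + m*v \<Longrightarrow> y < v \<Longrightarrow> x mod v = y"
  by simp

lemma Rw0: "p < v \<Longrightarrow> q < v \<Longrightarrow>
   Arr v (Rw v 0 p q s) 0 = p \<and> Arr v (Rw v 0 p q s) 1 = q \<and> Arr v (Rw v 0 p q s) 2 = (p+q+s) mod v"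
  by (simp add: Rw_def Arr_enc colv_def)

lemma Rw1: "p < v \<Longrightarrow> q < v \<Longrightarrow> s < v \<Longrightarrow>
   Arr v (Rw v 1 p q s) 1 = p \<and> Arr v (Rw v 1 p q s) 2 = q \<and> Arr v (Rw v 1 p q s) 0 = (q+2*v-p-s) mod v
   \<and> Arr v (Rw v 1 p q s) 3 = (p+s) mod v"
proof -
  assume h: "p < v" "q < v" "s < v"
  have "((q+2*v-p-s) mod v + (p + s)) mod v = (q+2*v-p-s + (p + s)) mod v"
    by (rule mod_add_left_eq)
  hence "((q+2*v-p-s) mod v + p + s) mod v = (q+2*v-p-s + p + s) mod v"
    by (simp only: add.assoc)
  also have "q+2*v-p-s + p + s = q + 2 * v" using h by simp
  also have "(q + 2*v) mod v = q" using h by simp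
  finally have c2: "((q+2*v-p-s) mod v + p + s) mod v = q" .
  have "v > 0" using h by simp
  thus ?thesis using h c2 by (simp add: Rw_def Arr_enc colv_def)
qed

lemma Rw2: "p < v \<Longrightarrow> q < v \<Longrightarrow> s < v \<Longrightarrow>
   Arr v (Rw v 2 p q s) 2 = p \<and> Arr v (Rw v 2 p q s) 3 = q \<and> Arr v (Rw v 2 p q s) 1 = (q+v-s) mod v"
proof -
  assume h: "p < v" "q < v" "s < v"
  have "((p+v-q) mod v + (q+v-s) mod v + s) mod v = (((p+v-q) mod v + (q+v-s) mod v) mod v + s) mod v"
    by (rule mod_add_left_eq[symmetric])
  also have "((p+v-q) mod v + (q+v-s) mod v) mod v = ((p+v-q) + (q+v-s)) mod v"
    by (rule mod_add_eq)
  also have "(((p+v-q) + (q+v-s)) mod v + s) mod v = ((p+v-q) + (q+v-s) + s) mod v"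
    by (rule mod_add_left_eq)
  also have "(p+v-q) + (q+v-s) + s = p + 2 * v" using h by simp
  also have "(p + 2*v) mod v = p" using h by simp
  finally have c2: "((p+v-q) mod v + (q+v-s) mod v + s) mod v = p" .
  have "((q+v-s) mod v + s) mod v = ((q+v-s) + s) mod v"
    by (rule mod_add_left_eq)
  also have "(q+v-s) + s = q + v" using h by simp
  also have "(q + v) mod v = q" using h by simp
  finally have c3: "((q+v-s) mod v + s) mod v = q" .
  have "v > 0" using h by simp
  thus ?thesis using h c2 c3 by (simp add: Rw_def Arr_enc colv_def)
qed

lemma Rw_base: "i \<le> 2 \<Longrightarrow> p < v \<Longrightarrow> q < v \<Longrightarrow> s < v \<Longrightarrow>
   Arr v (Rw v i p q s) i = p \<and> Arr v (Rw v i p q s) (i+1) = q"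
proof -
  assume h: "i \<le> 2" "p < v" "q < v" "s < v"
  have "i = 0 \<or> i = 1 \<or> i = 2" using h(1) by auto
  thus ?thesis
  proof (elim disjE)
    assume "i = 0" thus ?thesis using Rw0[of p v q s] h by simp
  next
    assume "i = 1" thus ?thesis using Rw1[of p v q s] h by (simp add: numeral_2_eq_2)
  next
    assume "i = 2" moreover have "(2::nat) + 1 = 3" by simp
    ultimately show ?thesis using Rw2[of p v q s] h by simp
  qed
qed

lemma Rw_less: "i \<le> 2 \<Longrightarrow> s \<le> d \<Longrightarrow> p < v \<Longrightarrow> q < v \<Longrightarrow> Rw v i p q s < (d+1)*v^2"
  apply (simp only: Rw_def split: if_split)
  apply (intro conjI impI enc_less)
  apply auto
  done

lemma Rw_sep:
  assumes "i \<le> 2" "i' \<le> 2" "p < v" "q < v" "s < v" "s' < v"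
    "{(i',p'),(i'+1,q')} \<noteq> {(i,p),(i+1,q)}"
    "Arr v (Rw v i p q s) i' = p'" "Arr v (Rw v i p q s) (i'+1) = q'"
    "Arr v (Rw v i p q s') i' = p'" "Arr v (Rw v i p q s') (i'+1) = q'"
  shows "s = s'"
proof (cases "i' = i")
  case True
  hence "p' = p" "q' = q" using assms(8,9) Rw_base[of i p v q s] assms(1-5) by auto
  thus ?thesis using assms(7) True by simp
next
  case False
  have v2: "v \<le> 2 * v" by simp
  show ?thesis
  proof (cases "i = 0")
    case True
    have "i' = 1 \<or> i' = 2" using False True assms(2) by auto
    hence "Arr v (Rw v i p q s) 2 = Arr v (Rw v i p q s') 2"
    proof
      assume "i' = 1" thus ?thesis using assms(9,11) by (simp add: numeral_2_eq_2)
    next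
      assume "i' = 2" thus ?thesis using assms(8,10) by simp
    qed
    thus ?thesis using Rw0[of p v q] True assms inj_add_mod[of s v s' "p+q"] by auto
  next
    case F2: False
    show ?thesis
    proof (cases "i = 1")
      case True
      show ?thesis
      proof (cases "i' = 0")
        case True
        hence "Arr v (Rw v 1 p q s) 0 = Arr v (Rw v 1 p q s') 0" using assms(8,10) \<open>i = 1\<close> by simp
        hence "(q+2*v-p - s) mod v = (q+2*v-p - s') mod v" using Rw1[of p v q s] Rw1[of p v q s'] assms by simp
        thus ?thesis using inj_sub_mod[of s v s' "q+2*v-p"] assms by simp
      next
        case False
        hence "i' = 2" using \<open>i' \<noteq> i\<close> True assms(2) by auto
        hence "Arr v (Rw v 1 p q s) 3 = Arr v (Rw v 1 p q s') 3" using assms(9,11) \<open>i = 1\<close> by simp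
        hence "(p + s) mod v = (p + s') mod v" using Rw1[of p v q s] Rw1[of p v q s'] assms by simp
        thus ?thesis using inj_add_mod[of s v s' p] assms by simp
      qed
    next
      case False
      hence i2: "i = 2" using F2 assms(1) by auto
      hence "i' = 0 \<or> i' = 1" using \<open>i' \<noteq> i\<close> assms(2) by auto
      hence "Arr v (Rw v 2 p q s) 1 = Arr v (Rw v 2 p q s') 1"
      proof
        assume "i' = 0" thus ?thesis using assms(9,11) i2 by simp
      next
        assume "i' = 1" thus ?thesis using assms(8,10) i2 by simp
      qed
      hence "(q + v - s) mod v = (q + v - s') mod v" using Rw2[of p v q s] Rw2[of p v q s'] assms by simp
      thus ?thesis using inj_sub_mod[of s v s' "q+v"] assms by simp
    qed
  qed
qed


lemma rho_pair: "rho N A {(i,p),(i+1,q)} = {r. r < N \<and> A r i = p \<and> A r (i+1) = q}"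
  unfolding rho_def by auto

lemma sep_abs:
  fixes R :: "nat \<Rightarrow> nat"
  assumes d1: "d \<ge> 1"
    and inT: "\<forall>s\<le>d. R s \<in> rho N A T"
    and uniq: "\<forall>T'\<in>TT. \<forall>s s'. s \<le> d \<longrightarrow> s' \<le> d \<longrightarrow> R s \<in> rho N A T' \<longrightarrow> R s' \<in> rho N A T' \<longrightarrow> s = s'"
    and cd: "card TT = d"
  shows "\<not> rho N A T \<subseteq> rho_set N A TT"
proof
  assume sub: "rho N A T \<subseteq> rho_set N A TT"
  have fin: "finite TT" using cd d1 card.infinite by fastforce
  define C where "C = (\<Union>T'\<in>TT. {s. s \<le> d \<and> R s \<in> rho N A T'})"
  have "card C \<le> (\<Sum>T'\<in>TT. card {s. s \<le> d \<and> R s \<in> rho N A T'})"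
    unfolding C_def using fin by (rule card_UN_le)
  also have "\<dots> \<le> (\<Sum>T'\<in>TT. 1)"
  proof (rule sum_mono)
    fix T' assume T': "T' \<in> TT"
    have f: "finite {s. s \<le> d \<and> R s \<in> rho N A T'}" by (rule finite_subset[of _ "{..d}"]) auto
    show "card {s. s \<le> d \<and> R s \<in> rho N A T'} \<le> 1"
      using card_le_Suc0_iff_eq[OF f] uniq T' by auto
  qed
  also have "\<dots> = d" using cd by simp
  finally have cC: "card C \<le> d" .
  have "{..d} \<subseteq> C"
  proof
    fix s assume "s \<in> {..d}"
    hence s: "s \<le> d" by simp
    hence "R s \<in> rho_set N A TT" using inT sub by blast
    then obtain T' where "T' \<in> TT" "R s \<in> rho N A T'" unfolding rho_set_def by blast
    thus "s \<in> C" unfolding C_def using s by blast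
  qed
  moreover have "finite C" unfolding C_def by (rule finite_subset[of _ "{..d}"]) auto
  ultimately have "card {..d} \<le> card C" by (rule card_mono[rotated])
  thus False using cC by simp
qed

lemma cda:
  assumes v2: "2 \<le> v" and k4: "k \<le> 4" and d1: "1 \<le> d" and dv: "d + 1 \<le> v"
  shows "is_CDA d 2 ((d+1)*v^2) k v (Arr v)"
  unfolding is_CDA_def
proof (intro conjI allI impI)
  show "is_array ((d+1)*v^2) k v (Arr v)"
    using v2 by (auto simp: is_array_def Arr_def colv_def)
next
  fix i and x :: "nat \<Rightarrow> nat" assume i: "i + 2 \<le> k" and x: "\<forall>j<2. x j \<in> {0..<v}"
  have x0: "x 0 < v" and x1: "x 1 < v" using x by auto
  have i2: "i \<le> 2" using i k4 by simp
  define r where "r = Rw v i (x 0) (x 1) 0"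
  have "r < (d+1)*v^2" unfolding r_def using Rw_less[OF i2 _ x0 x1] by simp
  moreover have "\<forall>j<2. Arr v r (i + j) = x j"
  proof (intro allI impI)
    fix j :: nat assume "j < 2"
    hence "j = 0 \<or> j = 1" by auto
    thus "Arr v r (i + j) = x j" using Rw_base[OF i2 x0 x1, of 0] v2 unfolding r_def by auto
  qed
  ultimately show "\<exists>r<(d+1)*v^2. \<forall>j<2. Arr v r (i + j) = x j" by blast
next
  fix TT T
  assume TT: "TT \<subseteq> cons_interactions 2 k v \<and> card TT = d"
  show "\<forall>T\<in>cons_interactions 2 k v. rho ((d+1)*v^2) (Arr v) T \<subseteq> rho_set ((d+1)*v^2) (Arr v) TT \<longleftrightarrow> T \<in> TT"
  proof (intro ballI iffI)
    fix T assume "T \<in> TT"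
    thus "rho ((d+1)*v^2) (Arr v) T \<subseteq> rho_set ((d+1)*v^2) (Arr v) TT"
      unfolding rho_set_def by blast
  next
    fix T assume T: "T \<in> cons_interactions 2 k v"
      and sub: "rho ((d+1)*v^2) (Arr v) T \<subseteq> rho_set ((d+1)*v^2) (Arr v) TT"
    show "T \<in> TT"
    proof (rule ccontr)
      assume nT: "T \<notin> TT"
      obtain i p q where ipq: "i + 2 \<le> k" "p < v" "q < v" "T = {(i,p),(i+1,q)}"
        using T unfolding cons2 by blast
      have i2: "i \<le> 2" using ipq k4 by simp
      let ?N = "(d+1)*v^2"
      have "\<not> rho ?N (Arr v) T \<subseteq> rho_set ?N (Arr v) TT"
      proof (rule sep_abs[OF d1 _ _ conjunct2[OF TT], where R = "Rw v i p q"])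
        show "\<forall>s\<le>d. Rw v i p q s \<in> rho ?N (Arr v) T"
        proof (intro allI impI)
          fix s assume s: "s \<le> d"
          hence sv: "s < v" using dv by simp
          show "Rw v i p q s \<in> rho ?N (Arr v) T"
            unfolding ipq(4) rho_pair using Rw_less[OF i2 s ipq(2,3)] Rw_base[OF i2 ipq(2,3) sv] by simp
        qed
      next
        show "\<forall>T'\<in>TT. \<forall>s s'. s \<le> d \<longrightarrow> s' \<le> d \<longrightarrow> Rw v i p q s \<in> rho ?N (Arr v) T'
                 \<longrightarrow> Rw v i p q s' \<in> rho ?N (Arr v) T' \<longrightarrow> s = s'"
        proof (intro ballI allI impI)
          fix T' s s' assume T': "T' \<in> TT" and s: "s \<le> d" "s' \<le> d"
            and r1: "Rw v i p q s \<in> rho ?N (Arr v) T'" and r2: "Rw v i p q s' \<in> rho ?N (Arr v) T'"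
          have "T' \<in> cons_interactions 2 k v" using T' TT by blast
          then obtain i' p' q' where ipq': "i' + 2 \<le> k" "p' < v" "q' < v" "T' = {(i',p'),(i'+1,q')}"
            unfolding cons2 by blast
          have ne: "{(i',p'),(i'+1,q')} \<noteq> {(i,p),(i+1,q)}" 
          proof
            assume "{(i',p'),(i'+1,q')} = {(i,p),(i+1,q)}"
            hence "T' = T" using ipq(4) ipq'(4) by simp
            thus False using T' nT by simp
          qed
          show "s = s'"
            using Rw_sep[OF i2 _ ipq(2,3) _ _ ne] r1 r2 ipq'(1) k4 s dv
            unfolding ipq'(4) rho_pair by simp
        qed
      qed
      thus False using sub by simp
    qed
  qed
qed

theorem mainTheorem14:
  fixes v k d :: nat
  assumes "v \<ge> 2" and "k \<in> {3, 4}" and "d \<ge> 1" and "d + 1 \<le> v"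
  shows "\<exists>A. is_optimum_CDA d 2 ((d + 1) * v ^ 2) k v A"
proof -
  have "k \<le> 4" using assms(2) by auto
  hence "is_CDA d 2 ((d+1)*v^2) k v (Arr v)" using cda assms by simp
  thus ?thesis unfolding is_optimum_CDA_def by blast
qed

end
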